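(* Let $\Sigma$ be a real symmetric positive semidefinite $n\times n$ matrix, let \[\mathcal S(\Sigma)=\{(\hat\Sigma,\tilde\Sigma)\mid \Sigma=\hat\Sigma+\tilde\Sigma,\ \hat\Sigma\ge0,\ \tilde\Sigma\ge 0,\ \tilde\Sigma\text{ diagonal}\},\] and for $K\in\mathbb R^{n\times n}$ let $L(K,\hat\Sigma,\tilde\Sigma)=\operatorname{trace}(\hat\Sigma-K\hat\Sigma-\hat\Sigma K'+K(\hat\Sigma+\tilde\Sigma)K')$. Then \[\min_{K}\max_{(\hat\Sigma,\tilde\Sigma)\in\mathcal S(\Sigma)}L(K,\hat\Sigma,\tilde\Sigma)=\max_{(\hat\Sigma,\tilde\Sigma)\in\mathcal S(\Sigma)}\min_K L(K,\hat\Sigma,\tilde\Sigma).\]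
   Context: All matrices $\hat\Sigma,\tilde\Sigma$ are real symmetric $n\times n$; $M\ge0$ means positive semidefinite. *)

theory Defs
  imports "HOL-Analysis.Analysis"
begin

definition psd :: "real^'n^'n \<Rightarrow> bool" where
  "psd M \<longleftrightarrow> transpose M = M \<and> (\<forall>x. 0 \<le> x \<bullet> (M *v x))"

definition is_diag :: "real^'n^'n \<Rightarrow> bool" where
  "is_diag M \<longleftrightarrow> (\<forall>i j. i \<noteq> j \<longrightarrow> M $ i $ j = 0)"

definition splits :: "real^'n^'n \<Rightarrow> ((real^'n^'n) \<times> (real^'n^'n)) set" where
  "splits \<Sigma> = {(Sh, St). \<Sigma> = Sh + St \<and> psd Sh \<and> psd St \<and> is_diag St}"

definition lossL :: "real^'n^'n \<Rightarrow> real^'n^'n \<Rightarrow> real^'n^'n \<Rightarrow> real" where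
  "lossL K Sh St = trace (Sh - K ** Sh - Sh ** transpose K + K ** (Sh + St) ** transpose K)"

end

theory Submission
  imports Defs
begin



lemma mm_add_r: "((A::real^'n::finite^'n) + B) ** C = A ** C + B ** C"
  by (vector matrix_matrix_mult_def sum.distrib[symmetric] field_simps)
lemma mm_diff_l: "(A::real^'n::finite^'n) ** (B - C) = A ** B - A ** C"
  by (vector matrix_matrix_mult_def sum_subtractf[symmetric] field_simps)
lemma mm_diff_r: "((A::real^'n::finite^'n) - B) ** C = A ** C - B ** C"
  by (vector matrix_matrix_mult_def sum_subtractf[symmetric] field_simps)
lemma mm_scale_l: "(c *\<^sub>R (A::real^'n::finite^'n)) ** B = c *\<^sub>R (A ** B)"
  by (simp add: scalar_matrix_assoc)
lemma mm_scale_r: "(A::real^'n::finite^'n) ** (c *\<^sub>R B) = c *\<^sub>R (A ** B)"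
  by (simp add: matrix_scalar_ac scalar_matrix_assoc)
lemma tr_scale: "trace (c *\<^sub>R (A::real^'n::finite^'n)) = c * trace A"
  by (simp add: trace_def sum_distrib_left)
lemma tr_transpose: "trace (transpose (A::real^'n::finite^'n)) = trace A"
  by (simp add: trace_def transpose_def)
lemma transpose_add: "transpose ((A::real^'n::finite^'n) + B) = transpose A + transpose B"
  by (vector transpose_def)
lemma transpose_diff: "transpose ((A::real^'n::finite^'n) - B) = transpose A - transpose B"
  by (vector transpose_def)
lemma tr_quad: "trace ((A::real^'n::finite^'n) ** S ** transpose A) = (\<Sum>i\<in>UNIV. (A$i) \<bullet> (S *v (A$i)))"
  unfolding trace_def
  apply (simp add: matrix_matrix_mult_def transpose_def inner_vec_def matrix_vector_mult_def
      sum_distrib_left sum_distrib_right mult_ac)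
  apply (rule sum.cong, simp)
  apply (subst sum.swap)
  apply (simp add: mult_ac)
  done

lemma sym_inner: "transpose (A::real^'n::finite^'n) = A \<Longrightarrow> x \<bullet> (A *v y) = y \<bullet> (A *v x)"
  by (metis dot_lmul_matrix inner_commute transpose_matrix_vector)

lemma sym_entry: "transpose (A::real^'n::finite^'n) = A \<Longrightarrow> A$i$j = A$j$i"
  by (metis transpose_def vec_lambda_beta)

lemma psd_null:
  fixes A :: "real^'n::finite^'n"
  assumes "psd A" "x \<bullet> (A *v x) = 0"
  shows "A *v x = 0"
proof -
  have sym: "transpose A = A" and pos: "\<And>v. 0 \<le> v \<bullet> (A *v v)" using assms(1) by (auto simp: psd_def)
  define y where "y = A *v x"
  define a where "a = y \<bullet> (A *v x)"
  define b where "b = y \<bullet> (A *v y)"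
  have ha: "a = y \<bullet> y" by (simp add: a_def y_def)
  have hb: "b \<ge> 0" using pos by (simp add: b_def)
  have key: "\<And>t. 0 \<le> 2*t*a + t*t*b"
  proof -
    fix t :: real
    have "0 \<le> (x + t *\<^sub>R y) \<bullet> (A *v (x + t *\<^sub>R y))" using pos by blast
    also have "\<dots> = x \<bullet> (A *v x) + t * (x \<bullet> (A *v y)) + t * (y \<bullet> (A *v x)) + t*t*b"
      by (simp add: matrix_vector_right_distrib matrix_vector_mult_scaleR inner_add_left inner_add_right b_def) (simp add: ring_distribs)
    also have "\<dots> = 2*t*a + t*t*b" using assms(2) sym_inner[OF sym, of x y] by (simp add: a_def)
    finally show "0 \<le> 2*t*a + t*t*b" .
  qed
  define c where "c = b + 1"
  have c0: "c > 0" using hb by (simp add: c_def)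
  from key[of "- a / c"] have h0: "0 \<le> 2*(-a/c)*a + (-a/c)*(-a/c)*b" .
  have "c*c*(2*(-a/c)*a + (-a/c)*(-a/c)*b) = -2*a*a*c + a*a*b"
    using c0 by (simp add: algebra_simps)
  moreover have "0 \<le> c*c*(2*(-a/c)*a + (-a/c)*(-a/c)*b)" using h0 c0 by simp
  ultimately have "0 \<le> -2*a*a*c + a*a*b" by simp
  hence "a*a*(b+2) \<le> 0" by (simp add: c_def algebra_simps)
  hence "a*a \<le> 0"
  proof -
    assume h: "a*a*(b+2) \<le> 0"
    have "b + 2 > 0" using hb by simp
    thus ?thesis using h by (simp add: mult_le_0_iff)
  qed
  moreover have "0 \<le> a*a" by simp
  ultimately have "a*a = 0" by linarith
  hence "a = 0" by simp
  thus ?thesis using ha by (simp add: y_def)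
qed

lemma solve_sym:
  fixes S :: "real^'n::finite^'n"
  assumes sym: "transpose S = S" and orth: "\<And>v. S *v v = 0 \<Longrightarrow> b \<bullet> v = 0"
  shows "\<exists>x. S *v x = b"
proof -
  obtain y z where y: "y \<in> span (range ((*v) S))" and z: "\<And>w. w \<in> span (range ((*v) S)) \<Longrightarrow> orthogonal z w"
    and b: "b = y + z"
    using orthogonal_subspace_decomp_exists by blast
  have sp: "span (range ((*v) S)) = range ((*v) S)"
    using span_linear_image[OF matrix_vector_mul_linear[of S], of UNIV] by simp
  have "z \<bullet> (S *v w) = 0" for w using z[of "S *v w"] sp by (simp add: orthogonal_def)
  hence "(S *v z) \<bullet> w = 0" for w using sym_inner[OF sym, of z w] by (simp add: inner_commute)
  hence "S *v z = 0" by (metis inner_eq_zero_iff)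
  hence "b \<bullet> z = 0" by (rule orth)
  moreover have "y \<bullet> z = 0" using z[OF y] by (simp add: orthogonal_def inner_commute)
  ultimately have "z \<bullet> z = 0" using b by (simp add: inner_add_left)
  hence "z = 0" by simp
  with y sp b show ?thesis by auto
qed

lemma exists_factor:
  fixes S M :: "real^'n::finite^'n"
  assumes sym: "transpose S = S" and nul: "\<And>v. S *v v = 0 \<Longrightarrow> M *v v = 0"
  shows "\<exists>X. X ** S = M"
proof -
  have "\<forall>r. \<exists>x. S *v x = M$r"
  proof
    fix r
    show "\<exists>x. S *v x = M$r"
    proof (rule solve_sym[OF sym])
      fix v assume "S *v v = 0"
      hence "M *v v = 0" by (rule nul)
      hence "(M *v v)$r = 0" by simp
      thus "M$r \<bullet> v = 0" by (simp add: matrix_vector_mult_def inner_vec_def mult.commute)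
    qed
  qed
  then obtain f where f: "\<And>r. S *v f r = M$r" by metis
  have "(\<chi> r. f r) ** S = M"
  proof (rule vec_eq_iff[THEN iffD2], rule allI, rule vec_eq_iff[THEN iffD2], rule allI)
    fix r j
    have "((\<chi> r. f r) ** S)$r$j = (\<Sum>k\<in>UNIV. S$j$k * f r $ k)"
      by (simp add: matrix_matrix_mult_def sym_entry[OF sym, of j] mult.commute)
    also have "\<dots> = (S *v f r)$j" by (simp add: matrix_vector_mult_def)
    also have "\<dots> = M$r$j" by (simp add: f)
    finally show "((\<chi> r. f r) ** S)$r$j = M$r$j" .
  qed
  thus ?thesis by blast
qed



lemma tr_mt: "trace ((A::real^'n::finite^'n) ** transpose B) = trace (B ** transpose A)"
  by (metis matrix_transpose_mul tr_transpose transpose_transpose)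

lemma loss_expand:
  fixes K Sh St :: "real^'n::finite^'n"
  assumes "transpose Sh = Sh"
  shows "lossL K Sh St = trace Sh - 2 * trace (K ** Sh) + trace (K ** (Sh + St) ** transpose K)"
proof -
  have "trace (Sh ** transpose K) = trace (K ** Sh)"
    using tr_mt[of Sh K] assms by simp
  thus ?thesis unfolding lossL_def by (simp add: trace_add trace_sub)
qed

lemma loss_at_min:
  fixes K Sh St S :: "real^'n::finite^'n"
  assumes "transpose Sh = Sh" "transpose S = S" "Sh + St = S" "K ** S = Sh"
  shows "lossL K Sh St = trace Sh - trace (K ** Sh)"
proof -
  have "K ** S ** transpose K = K ** Sh"
    by (metis assms(1,2,4) matrix_mul_assoc matrix_transpose_mul)
  thus ?thesis using loss_expand[OF assms(1)] assms(3) by simp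
qed

lemma loss_min:
  fixes K K' Sh St S :: "real^'n::finite^'n"
  assumes "transpose Sh = Sh" "transpose S = S" "Sh + St = S" "K ** S = Sh"
  shows "lossL K' Sh St = lossL K Sh St + trace ((K' - K) ** S ** transpose (K' - K))"
proof -
  have e1: "K' ** S ** transpose K = K' ** Sh"
    by (metis assms(1,2,4) matrix_mul_assoc matrix_transpose_mul)
  have e2: "trace (K ** S ** transpose K') = trace (K' ** Sh)"
    using tr_mt[of "K ** S" K'] assms(1,4) by simp
  have e3: "K ** S ** transpose K = K ** Sh"
    by (metis assms(1,2,4) matrix_mul_assoc matrix_transpose_mul)
  have "trace ((K' - K) ** S ** transpose (K' - K))
     = trace (K' ** S ** transpose K') - trace (K' ** S ** transpose K) - trace (K ** S ** transpose K')
       + trace (K ** S ** transpose K)"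
    by (simp add: mm_diff_l mm_diff_r transpose_diff trace_add trace_sub)
  also have "\<dots> = trace (K' ** S ** transpose K') - 2 * trace (K' ** Sh) + trace (K ** Sh)"
    using e1 e2 e3 by simp
  finally show ?thesis
    using loss_expand[OF assms(1), of K' St] loss_at_min[OF assms] assms(3) by simp
qed

lemma quad_nonneg:
  fixes A S :: "real^'n::finite^'n"
  assumes "psd S"
  shows "0 \<le> trace (A ** S ** transpose A)"
  unfolding tr_quad using assms by (auto simp: psd_def intro: sum_nonneg)

lemma null_split:
  fixes S Sh St :: "real^'n::finite^'n"
  assumes "psd Sh" "psd St" "S = Sh + St" "S *v v = 0"
  shows "Sh *v v = 0 \<and> St *v v = 0"
proof -
  have a: "0 \<le> v \<bullet> (Sh *v v)" "0 \<le> v \<bullet> (St *v v)" using assms(1,2) by (auto simp: psd_def)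
  have "v \<bullet> (Sh *v v) + v \<bullet> (St *v v) = 0"
    using assms(3,4) by (metis inner_add_right inner_zero_right matrix_vector_mult_add_rdistrib)
  hence "v \<bullet> (Sh *v v) = 0" "v \<bullet> (St *v v) = 0" using a by linarith+
  thus ?thesis using psd_null assms(1,2) by blast
qed



lemma splitsD:
  assumes "s \<in> splits S"
  shows "S = fst s + snd s" "psd (fst s)" "psd (snd s)" "is_diag (snd s)"
  using assms by (auto simp: splits_def)

lemma psd_sym: "psd A \<Longrightarrow> transpose A = A" by (simp add: psd_def)

lemma split_zero: "psd S \<Longrightarrow> (S, 0) \<in> splits S"
  by (simp add: splits_def psd_def is_diag_def transpose_def vec_eq_iff)

lemma split_min_exists:
  fixes S :: "real^'n::finite^'n"
  assumes "psd S" "s \<in> splits S"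
  shows "\<exists>K. K ** S = fst s"
  using exists_factor[OF psd_sym[OF assms(1)]] null_split splitsD[OF assms(2)] by metis

lemma scale_mv: "(c *\<^sub>R (A::real^'n::finite^'n)) *v x = c *\<^sub>R (A *v x)"
  by (simp add: matrix_vector_mult_def vec_eq_iff sum_distrib_left mult.assoc)

lemma psd_comb:
  fixes A B :: "real^'n::finite^'n"
  assumes "psd A" "psd B" "0 \<le> t" "t \<le> 1"
  shows "psd ((1 - t) *\<^sub>R A + t *\<^sub>R B)"
proof -
  have "transpose ((1 - t) *\<^sub>R A + t *\<^sub>R B) = (1 - t) *\<^sub>R A + t *\<^sub>R B"
    using assms(1,2) by (simp add: psd_def transpose_add transpose_scalar)
  moreover have "0 \<le> x \<bullet> (((1 - t) *\<^sub>R A + t *\<^sub>R B) *v x)" for x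
  proof -
    have "x \<bullet> (((1 - t) *\<^sub>R A + t *\<^sub>R B) *v x) = (1-t) * (x \<bullet> (A *v x)) + t * (x \<bullet> (B *v x))"
      by (simp add: matrix_vector_mult_add_rdistrib scale_mv inner_add_right)
    thus ?thesis using assms by (simp add: psd_def)
  qed
  ultimately show ?thesis by (simp add: psd_def)
qed

lemma diag_comb: "is_diag A \<Longrightarrow> is_diag B \<Longrightarrow> is_diag ((1 - t) *\<^sub>R A + t *\<^sub>R B)"
  by (simp add: is_diag_def)

lemma cont_loss: "continuous_on UNIV (\<lambda>s. lossL K (fst s) (snd s :: real^'n::finite^'n))"
  unfolding lossL_def trace_def matrix_matrix_mult_def transpose_def
  by (intro continuous_intros)

lemma closed_splits: "closed (splits (S::real^'n::finite^'n))"
proof -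
  have eq: "splits S = {p. S = fst p + snd p} \<inter> {p. transpose (fst p) = fst p}
     \<inter> {p. \<forall>x. 0 \<le> x \<bullet> (fst p *v x)} \<inter> {p. transpose (snd p) = snd p}
     \<inter> {p. \<forall>x. 0 \<le> x \<bullet> (snd p *v x)} \<inter> {p. \<forall>i j. i \<noteq> j \<longrightarrow> snd p $ i $ j = 0}"
    by (auto simp: splits_def psd_def is_diag_def)
  have c1: "closed {p. S = fst p + (snd p :: real^'n^'n)}"
    by (rule closed_Collect_eq) (intro continuous_intros)+
  have c2: "closed {p. transpose (fst p) = (fst p :: real^'n^'n)}"
    unfolding transpose_def by (rule closed_Collect_eq) (intro continuous_intros)+
  have c3: "closed {p. transpose (snd p) = (snd p :: real^'n^'n)}"
    unfolding transpose_def by (rule closed_Collect_eq) (intro continuous_intros)+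
  have c4: "closed {p. \<forall>x. 0 \<le> x \<bullet> (fst p *v x :: real^'n)}"
    unfolding inner_vec_def matrix_vector_mult_def
    by (intro closed_Collect_all closed_Collect_le continuous_intros)
  have c5: "closed {p. \<forall>x. 0 \<le> x \<bullet> (snd p *v x :: real^'n)}"
    unfolding inner_vec_def matrix_vector_mult_def
    by (intro closed_Collect_all closed_Collect_le continuous_intros)
  have c6: "closed {p. \<forall>i j. i \<noteq> j \<longrightarrow> (snd p :: real^'n^'n) $ i $ j = 0}"
  proof (intro closed_Collect_all)
    fix i j :: 'n
    show "closed {p. i \<noteq> j \<longrightarrow> (snd p :: real^'n^'n) $ i $ j = 0}"
    proof (cases "i = j")
      case True thus ?thesis by simp
    next
      case False
      have "closed {p. (snd p :: real^'n^'n) $ i $ j = 0}"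
        by (rule closed_Collect_eq) (intro continuous_intros)+
      thus ?thesis using False by simp
    qed
  qed
  show ?thesis unfolding eq using c1 c2 c3 c4 c5 c6 by (intro closed_Int) auto
qed

lemma psd_diag_nonneg: "psd (A::real^'n::finite^'n) \<Longrightarrow> 0 \<le> A $ i $ i"
proof -
  assume "psd A"
  hence "0 \<le> axis i 1 \<bullet> (A *v axis i 1)" by (simp add: psd_def)
  also have "axis i 1 \<bullet> (A *v axis i 1) = A $ i $ i"
    by (simp add: matrix_vector_mult_basis inner_axis' column_def)
  finally show ?thesis .
qed

lemma norm_mat_le: "norm (M::real^'n::finite^'n) \<le> (\<Sum>i\<in>UNIV. \<Sum>j\<in>UNIV. \<bar>M$i$j\<bar>)"
proof -
  have "norm M \<le> (\<Sum>i\<in>UNIV. norm (M$i))" by (simp add: norm_vec_def L2_set_le_sum)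
  also have "\<dots> \<le> (\<Sum>i\<in>UNIV. \<Sum>j\<in>UNIV. \<bar>M$i$j\<bar>)"
    by (rule sum_mono) (rule norm_le_l1_cart)
  finally show ?thesis .
qed

lemma bounded_splits: "bounded (splits (S::real^'n::finite^'n))"
proof -
  define B where "B = (\<Sum>i\<in>UNIV. \<Sum>j\<in>UNIV. \<bar>S$i$j\<bar>)"
  have "norm p \<le> norm S + 2 * B" if p: "p \<in> splits S" for p
  proof -
    obtain Sh St where pe: "p = (Sh, St)" by (cases p)
    have sp: "S = Sh + St" "psd Sh" "psd St" "is_diag St" using splitsD[OF p] pe by auto
    have ent: "\<bar>St$i$j\<bar> \<le> \<bar>S$i$j\<bar>" for i j
    proof (cases "i = j")
      case True
      have "0 \<le> St$i$i" "0 \<le> Sh$i$i" using psd_diag_nonneg sp by blast+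
      moreover have "S$i$i = Sh$i$i + St$i$i" using sp(1) by simp
      ultimately show ?thesis using True by simp
    next
      case False thus ?thesis using sp(4) by (simp add: is_diag_def)
    qed
    have nSt: "norm St \<le> B"
      using norm_mat_le[of St] unfolding B_def
      by (meson ent order_trans sum_mono)
    have "norm Sh \<le> norm S + norm St"
      using sp(1) norm_triangle_ineq4[of S St] by (simp add: algebra_simps)
    thus ?thesis using norm_Pair_le[of Sh St] nSt pe by simp
  qed
  thus ?thesis unfolding bounded_iff by blast
qed

lemma compact_splits: "compact (splits (S::real^'n::finite^'n))"
  using bounded_closed_imp_seq_compact[OF bounded_splits closed_splits] by (simp add: compact_eq_seq_compact_metric)



lemma arith_fo:
  fixes lin q :: real
  assumes q: "0 \<le> q" and H: "\<And>t. 0 < t \<Longrightarrow> t \<le> 1 \<Longrightarrow> t * lin - t * t * q \<le> 0"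
  shows "lin \<le> 0"
proof (rule ccontr)
  assume "\<not> lin \<le> 0"
  hence l: "lin > 0" by simp
  define t where "t = lin / (lin + q)"
  have t0: "0 < t" using l q by (simp add: t_def)
  have t1: "t \<le> 1" using l q by (simp add: t_def)
  have "t * lin \<le> t * (t * q)" using H[OF t0 t1] by (simp add: algebra_simps)
  hence "lin \<le> t * q" using t0 by simp
  hence "lin * (lin + q) \<le> lin * q" using l q by (simp add: t_def field_simps)
  hence "lin * lin \<le> 0" by (simp add: algebra_simps)
  thus False using l by (simp add: mult_le_0_iff)
qed

context
  fixes S :: "real^'n::finite^'n"
  assumes psdS: "psd S"
begin

lemma symS: "transpose S = S" using psdS by (simp add: psd_def)

lemma min_at:
  assumes s: "s \<in> splits S" and K: "K ** S = fst s"
  shows "lossL K (fst s) (snd s) \<le> lossL K' (fst s) (snd s)"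
proof -
  note sp = splitsD[OF s]
  have "lossL K' (fst s) (snd s) = lossL K (fst s) (snd s) + trace ((K' - K) ** S ** transpose (K' - K))"
    using loss_min[OF psd_sym[OF sp(2)] symS sp(1)[symmetric] K] .
  thus ?thesis using quad_nonneg[OF psdS, of "K' - K"] by simp
qed

lemma inf_at:
  assumes s: "s \<in> splits S" and K: "K ** S = fst s"
  shows "(INF K'. lossL K' (fst s) (snd s)) = lossL K (fst s) (snd s)"
proof (rule antisym)
  have bdd: "bdd_below (range (\<lambda>K'. lossL K' (fst s) (snd s)))"
    by (rule bdd_belowI[where m="lossL K (fst s) (snd s)"]) (auto intro: min_at[OF s K])
  show "(INF K'. lossL K' (fst s) (snd s)) \<le> lossL K (fst s) (snd s)"
    by (rule cINF_lower[OF bdd]) simp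
  show "lossL K (fst s) (snd s) \<le> (INF K'. lossL K' (fst s) (snd s))"
    by (rule cINF_greatest) (auto intro: min_at[OF s K])
qed

lemma part1: "\<exists>s\<in>splits S. \<forall>s'\<in>splits S. lossL K (fst s') (snd s') \<le> lossL K (fst s) (snd s)"
  using continuous_attains_sup[OF compact_splits _ continuous_on_subset[OF cont_loss subset_UNIV]]
    split_zero[OF psdS] by blast

lemma bdd_loss: "bdd_above ((\<lambda>s. lossL K (fst s) (snd s)) ` splits S)"
  using part1[of K] by (auto intro: bdd_aboveI2)

lemma phi_le:
  assumes s: "s \<in> splits S"
  shows "(INF K'. lossL K' (fst s) (snd s)) \<le> lossL K (fst s) (snd s)"
proof -
  obtain K0 where K0: "K0 ** S = fst s" using split_min_exists[OF psdS s] by blast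
  show ?thesis using inf_at[OF s K0] min_at[OF s K0] by simp
qed

lemma phi_max: "\<exists>s0\<in>splits S. \<forall>s\<in>splits S. (INF K. lossL K (fst s) (snd s))
                 \<le> (INF K. lossL K (fst s0) (snd s0))"
proof -
  define phi where "phi s = (INF K. lossL K (fst s) (snd s))" for s :: "(real^'n^'n) \<times> (real^'n^'n)"
  have ne: "splits S \<noteq> {}" using split_zero[OF psdS] by blast
  have bdd: "bdd_above (phi ` splits S)"
  proof -
    obtain B where B: "\<And>s. s \<in> splits S \<Longrightarrow> lossL 0 (fst s) (snd s) \<le> B"
      using bdd_loss[of 0] by (auto simp: bdd_above_def)
    show ?thesis unfolding phi_def
    proof (rule bdd_aboveI2[where M=B])
      fix x assume x: "x \<in> splits S"
      show "(INF K. lossL K (fst x) (snd x)) \<le> B"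
        using phi_le[OF x, of 0] B[OF x] by linarith
    qed
  qed
  define v where "v = (SUP s\<in>splits S. phi s)"
  define F where "F = {T. \<exists>(K::real^'n^'n) c. c < v \<and> T = {s. c \<le> lossL K (fst s) (snd s)}}"
  have "splits S \<inter> \<Inter>F \<noteq> {}"
  proof (rule compact_imp_fip[OF compact_splits])
    fix T assume "T \<in> F"
    then obtain K c where T: "T = {s. c \<le> lossL K (fst s) (snd s)}" by (auto simp: F_def)
    show "closed T" unfolding T by (intro closed_Collect_le continuous_on_const cont_loss)
  next
    fix F' assume fin: "finite F'" and sub: "F' \<subseteq> F"
    show "splits S \<inter> \<Inter>F' \<noteq> {}"
    proof (cases "F' = {}")
      case True thus ?thesis using ne by simp
    next
      case False
      have "\<forall>T\<in>F'. \<exists>p. snd p < v \<and> T = {s. snd p \<le> lossL (fst p) (fst s) (snd s)}"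
      proof
        fix T assume "T \<in> F'"
        hence "T \<in> F" using sub by blast
        then obtain K c where "c < v" "T = {s. c \<le> lossL K (fst s) (snd s)}" by (auto simp: F_def)
        thus "\<exists>p. snd p < v \<and> T = {s. snd p \<le> lossL (fst p) (fst s) (snd s)}"
          by (intro exI[of _ "(K, c)"]) simp
      qed
      then obtain g where g0: "\<forall>T\<in>F'. snd (g T) < v \<and> T = {s. snd (g T) \<le> lossL (fst (g T)) (fst s) (snd s)}"
        by (rule bchoice[THEN exE]) blast
      have g: "\<And>T. T \<in> F' \<Longrightarrow> snd (g T) < v \<and> T = {s. snd (g T) \<le> lossL (fst (g T)) (fst s) (snd s)}"
        using g0 by blast
      define m where "m = Max ((\<lambda>T. snd (g T)) ` F')"
      have "m \<in> (\<lambda>T. snd (g T)) ` F'" unfolding m_def using fin False by (intro Max_in) auto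
      then obtain T0 where "T0 \<in> F'" "m = snd (g T0)" by blast
      hence mv: "m < v" using g by blast
      hence "\<exists>s\<in>splits S. m < phi s"
        unfolding v_def using less_cSUP_iff[OF ne bdd] by simp
      then obtain s where s: "s \<in> splits S" and ms: "m < phi s" by blast
      have "s \<in> T" if T: "T \<in> F'" for T
      proof -
        have "snd (g T) \<le> m" unfolding m_def using fin T by (intro Max_ge) auto
        also have "\<dots> \<le> lossL (fst (g T)) (fst s) (snd s)"
          using ms phi_le[OF s, of "fst (g T)"] unfolding phi_def by simp
        finally have "snd (g T) \<le> lossL (fst (g T)) (fst s) (snd s)" .
        hence "s \<in> {s. snd (g T) \<le> lossL (fst (g T)) (fst s) (snd s)}" by simp
        thus ?thesis using g[OF T] by simp
      qed
      thus ?thesis using s by blast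
    qed
  qed
  then obtain s0 where s0: "s0 \<in> splits S" and s0F: "s0 \<in> \<Inter>F" by blast
  have "v \<le> lossL K (fst s0) (snd s0)" for K
  proof (rule dense_le)
    fix c assume "c < v"
    hence "{s. c \<le> lossL K (fst s) (snd s)} \<in> F" unfolding F_def by blast
    thus "c \<le> lossL K (fst s0) (snd s0)" using s0F by blast
  qed
  hence "v \<le> phi s0" unfolding phi_def by (intro cINF_greatest) auto
  moreover have "phi s \<le> v" if "s \<in> splits S" for s
    unfolding v_def by (rule cSUP_upper[OF that bdd])
  ultimately have "\<forall>s\<in>splits S. phi s \<le> phi s0" by (meson order_trans)
  thus ?thesis using s0 unfolding phi_def by blast
qed

lemma first_order:
  assumes s0: "s0 \<in> splits S" and K0: "K0 ** S = fst s0"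
    and mx: "\<And>s. s \<in> splits S \<Longrightarrow> (INF K. lossL K (fst s) (snd s)) \<le> (INF K. lossL K (fst s0) (snd s0))"
    and s: "s \<in> splits S"
  shows "lossL K0 (fst s) (snd s) \<le> lossL K0 (fst s0) (snd s0)"
proof -
  obtain Sh0 St0 where s0e: "s0 = (Sh0, St0)" by (cases s0)
  obtain Sh St where se: "s = (Sh, St)" by (cases s)
  have p0: "S = Sh0 + St0" "psd Sh0" "psd St0" "is_diag St0" using splitsD[OF s0] s0e by auto
  have p: "S = Sh + St" "psd Sh" "psd St" "is_diag St" using splitsD[OF s] se by auto
  define E where "E = St - St0"
  have ShE: "Sh = Sh0 - E" using p0(1) p(1) unfolding E_def by (simp add: algebra_simps)
  have symE: "transpose E = E" using psd_sym[OF p(3)] psd_sym[OF p0(3)] by (simp add: E_def transpose_diff)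
  have "\<exists>X. X ** S = E"
  proof (rule exists_factor[OF symS])
    fix v assume "S *v v = 0"
    hence "St *v v = 0" "St0 *v v = 0" using null_split p p0 by blast+
    thus "E *v v = 0" by (simp add: E_def matrix_vector_mult_diff_rdistrib)
  qed
  then obtain X where X: "X ** S = E" by blast
  have K0': "K0 ** S = Sh0" using K0 s0e by simp
  define lin where "lin = 2 * trace (K0 ** E) - trace E"
  define q where "q = trace (X ** E)"
  have q0: "0 \<le> q"
  proof -
    have tE: "transpose E = S ** transpose X"
    proof -
      have "transpose E = transpose (X ** S)" using X by simp
      also have "\<dots> = transpose S ** transpose X" by (rule matrix_transpose_mul)
      finally show ?thesis using symS by simp
    qed
    have "X ** E = X ** transpose E" using symE by simp
    also have "\<dots> = X ** S ** transpose X" unfolding tE by (rule matrix_mul_assoc)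
    finally show ?thesis using quad_nonneg[OF psdS, of X] by (simp add: q_def)
  qed
  have XSh0: "trace (X ** Sh0) = trace (K0 ** E)"
  proof -
    have "Sh0 = transpose (K0 ** S)" using K0' psd_sym[OF p0(2)] by simp
    also have "\<dots> = S ** transpose K0" using symS by (simp add: matrix_transpose_mul)
    finally have "X ** Sh0 = X ** S ** transpose K0" by (simp add: matrix_mul_assoc)
    hence "X ** Sh0 = E ** transpose K0" using X by simp
    hence "trace (X ** Sh0) = trace (K0 ** transpose E)" using tr_mt[of E K0] by simp
    thus ?thesis using symE by simp
  qed
  have phi0: "(INF K. lossL K (fst s0) (snd s0)) = trace Sh0 - trace (K0 ** Sh0)"
    using inf_at[OF s0 K0] loss_at_min[OF psd_sym[OF p0(2)] symS p0(1)[symmetric] K0'] s0e by simp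
  have H: "t * lin - t * t * q \<le> 0" if t0: "0 < t" and t1: "t \<le> 1" for t
  proof -
    define st where "st = (Sh0 - t *\<^sub>R E, St0 + t *\<^sub>R E)"
    have e1: "Sh0 - t *\<^sub>R E = (1 - t) *\<^sub>R Sh0 + t *\<^sub>R Sh" unfolding ShE by (simp add: algebra_simps)
    have e2: "St0 + t *\<^sub>R E = (1 - t) *\<^sub>R St0 + t *\<^sub>R St" by (simp add: E_def algebra_simps)
    have st: "st \<in> splits S"
    proof -
      have "S = (Sh0 - t *\<^sub>R E) + (St0 + t *\<^sub>R E)" using p0(1) by simp
      moreover have "psd (Sh0 - t *\<^sub>R E)" unfolding e1 using psd_comb[OF p0(2) p(2)] t0 t1 by simp
      moreover have "psd (St0 + t *\<^sub>R E)" unfolding e2 using psd_comb[OF p0(3) p(3)] t0 t1 by simp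
      moreover have "is_diag (St0 + t *\<^sub>R E)" unfolding e2 using diag_comb p(4) p0(4) by blast
      ultimately show ?thesis by (simp add: splits_def st_def)
    qed
    have psdt: "psd (Sh0 - t *\<^sub>R E)" using st by (auto simp: splits_def st_def)
    define Kt where "Kt = K0 - t *\<^sub>R X"
    have Kt: "Kt ** S = fst st" using K0' X by (simp add: Kt_def st_def mm_diff_r mm_scale_l)
    have "(INF K. lossL K (fst st) (snd st)) = lossL Kt (fst st) (snd st)" by (rule inf_at[OF st Kt])
    also have "\<dots> = trace (Sh0 - t *\<^sub>R E) - trace (Kt ** (Sh0 - t *\<^sub>R E))"
      using loss_at_min[OF psd_sym[OF psdt] symS _ Kt[unfolded st_def fst_conv]] p0(1)
      by (simp add: st_def algebra_simps)
    also have "\<dots> = (trace Sh0 - trace (K0 ** Sh0)) + t * lin - t * t * q"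
      unfolding Kt_def lin_def q_def
      by (simp add: mm_diff_l mm_diff_r mm_scale_l mm_scale_r trace_sub trace_add tr_scale XSh0 algebra_simps)
    finally have "(INF K. lossL K (fst st) (snd st)) = (INF K. lossL K (fst s0) (snd s0)) + t * lin - t * t * q"
      using phi0 by simp
    with mx[OF st] show ?thesis by simp
  qed
  have "lin \<le> 0" by (rule arith_fo[OF q0 H])
  moreover have "lossL K0 (fst s) (snd s) - lossL K0 (fst s0) (snd s0) = lin"
  proof -
    have "lossL K0 Sh St = trace Sh - 2 * trace (K0 ** Sh) + trace (K0 ** S ** transpose K0)"
      using loss_expand[OF psd_sym[OF p(2)]] p(1) by simp
    moreover have "lossL K0 Sh0 St0 = trace Sh0 - 2 * trace (K0 ** Sh0) + trace (K0 ** S ** transpose K0)"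
      using loss_expand[OF psd_sym[OF p0(2)]] p0(1) by simp
    ultimately show ?thesis using ShE s0e se
      by (simp add: lin_def mm_diff_l trace_sub)
  qed
  ultimately show ?thesis by simp
qed

end


theorem proposition12:
  fixes \<Sigma> :: "real^'n^'n"
  assumes "psd \<Sigma>"
  shows "(\<forall>K. \<exists>s\<in>splits \<Sigma>. \<forall>s'\<in>splits \<Sigma>.
            lossL K (fst s') (snd s') \<le> lossL K (fst s) (snd s))
    \<and> (\<forall>s\<in>splits \<Sigma>. \<exists>K. \<forall>K'. lossL K (fst s) (snd s) \<le> lossL K' (fst s) (snd s))
    \<and> (\<exists>K0. \<forall>K. (SUP s\<in>splits \<Sigma>. lossL K0 (fst s) (snd s))
                 \<le> (SUP s\<in>splits \<Sigma>. lossL K (fst s) (snd s)))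
    \<and> (\<exists>s0\<in>splits \<Sigma>. \<forall>s\<in>splits \<Sigma>. (INF K. lossL K (fst s) (snd s))
                 \<le> (INF K. lossL K (fst s0) (snd s0)))
    \<and> (INF K. SUP s\<in>splits \<Sigma>. lossL K (fst s) (snd s))
      = (SUP s\<in>splits \<Sigma>. INF K. lossL K (fst s) (snd s))"
proof -
  note ps = assms
  have ne: "splits \<Sigma> \<noteq> {}" using split_zero[OF ps] by blast
  obtain s0 where s0: "s0 \<in> splits \<Sigma>"
    and mx: "\<And>s. s \<in> splits \<Sigma> \<Longrightarrow> (INF K. lossL K (fst s) (snd s)) \<le> (INF K. lossL K (fst s0) (snd s0))"
    using phi_max[OF ps] by blast
  obtain K0 where K0: "K0 ** \<Sigma> = fst s0" using split_min_exists[OF ps s0] by blast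
  have sa: "\<And>s. s \<in> splits \<Sigma> \<Longrightarrow> lossL K0 (fst s) (snd s) \<le> lossL K0 (fst s0) (snd s0)"
    using first_order[OF ps s0 K0 mx] by blast
  have sb: "\<And>K. lossL K0 (fst s0) (snd s0) \<le> lossL K (fst s0) (snd s0)"
    using min_at[OF ps s0 K0] by blast
  have phi0: "(INF K. lossL K (fst s0) (snd s0)) = lossL K0 (fst s0) (snd s0)"
    using inf_at[OF ps s0 K0] .
  have supK0: "(SUP s\<in>splits \<Sigma>. lossL K0 (fst s) (snd s)) = lossL K0 (fst s0) (snd s0)"
  proof (rule antisym)
    show "(SUP s\<in>splits \<Sigma>. lossL K0 (fst s) (snd s)) \<le> lossL K0 (fst s0) (snd s0)"
      using sa ne by (intro cSUP_least) auto
    show "lossL K0 (fst s0) (snd s0) \<le> (SUP s\<in>splits \<Sigma>. lossL K0 (fst s) (snd s))"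
      by (rule cSUP_upper[OF s0 bdd_loss[OF ps]])
  qed
  have supK: "lossL K0 (fst s0) (snd s0) \<le> (SUP s\<in>splits \<Sigma>. lossL K (fst s) (snd s))" for K
  proof -
    have "lossL K (fst s0) (snd s0) \<le> (SUP s\<in>splits \<Sigma>. lossL K (fst s) (snd s))"
      by (rule cSUP_upper[OF s0 bdd_loss[OF ps]])
    thus ?thesis using sb[of K] by linarith
  qed
  have P1: "\<forall>K. \<exists>s\<in>splits \<Sigma>. \<forall>s'\<in>splits \<Sigma>. lossL K (fst s') (snd s') \<le> lossL K (fst s) (snd s)"
    using part1[OF ps] by blast
  have P2: "\<forall>s\<in>splits \<Sigma>. \<exists>K. \<forall>K'. lossL K (fst s) (snd s) \<le> lossL K' (fst s) (snd s)"
  proof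
    fix s assume s: "s \<in> splits \<Sigma>"
    obtain K where K: "K ** \<Sigma> = fst s" using split_min_exists[OF ps s] by blast
    show "\<exists>K. \<forall>K'. lossL K (fst s) (snd s) \<le> lossL K' (fst s) (snd s)"
      using min_at[OF ps s K] by blast
  qed
  have P3: "\<exists>K0. \<forall>K. (SUP s\<in>splits \<Sigma>. lossL K0 (fst s) (snd s))
                 \<le> (SUP s\<in>splits \<Sigma>. lossL K (fst s) (snd s))"
    using supK supK0 by (intro exI[of _ K0]) simp
  have P4: "\<exists>s0\<in>splits \<Sigma>. \<forall>s\<in>splits \<Sigma>. (INF K. lossL K (fst s) (snd s))
                 \<le> (INF K. lossL K (fst s0) (snd s0))"
    using s0 mx by blast
  have L: "(INF K. SUP s\<in>splits \<Sigma>. lossL K (fst s) (snd s)) = lossL K0 (fst s0) (snd s0)"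
  proof (rule antisym)
    have bdd: "bdd_below (range (\<lambda>K. SUP s\<in>splits \<Sigma>. lossL K (fst s) (snd s)))"
      by (rule bdd_belowI[where m="lossL K0 (fst s0) (snd s0)"]) (auto intro: supK)
    show "(INF K. SUP s\<in>splits \<Sigma>. lossL K (fst s) (snd s)) \<le> lossL K0 (fst s0) (snd s0)"
      using cINF_lower[OF bdd, of K0] supK0 by simp
    show "lossL K0 (fst s0) (snd s0) \<le> (INF K. SUP s\<in>splits \<Sigma>. lossL K (fst s) (snd s))"
      by (rule cINF_greatest) (auto intro: supK)
  qed
  have R: "(SUP s\<in>splits \<Sigma>. INF K. lossL K (fst s) (snd s)) = lossL K0 (fst s0) (snd s0)"
  proof (rule antisym)
    show "(SUP s\<in>splits \<Sigma>. INF K. lossL K (fst s) (snd s)) \<le> lossL K0 (fst s0) (snd s0)"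
      using mx ne phi0 by (intro cSUP_least) auto
    have bdd: "bdd_above ((\<lambda>s. INF K. lossL K (fst s) (snd s)) ` splits \<Sigma>)"
      by (rule bdd_aboveI2[where M="INF K. lossL K (fst s0) (snd s0)"]) (rule mx)
    show "lossL K0 (fst s0) (snd s0) \<le> (SUP s\<in>splits \<Sigma>. INF K. lossL K (fst s) (snd s))"
      using cSUP_upper[OF s0 bdd] phi0 by simp
  qed
  show ?thesis using P1 P2 P3 P4 L R by simp
qed

end
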